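(* Under the hypotheses of Proposition 5.1, let $(\bar u,\bar v)$ be the branch of stationary solutions given there. Then for $\alpha>\alpha_0$ with $\alpha-\alpha_0$ small enough: in case (PBC), $\bar u>0$ and $\bar v>0$ on $[0,1]$; in case (DBC), $\bar u>0$ on $(0,1]$ and $\bar v>0$ on $[0,1)$.
   Context: System (S): $\partial_t u+\partial_x(c(x)u)=\frac{\alpha v}{1+u+v}-u$, $\partial_t v-\partial_x(c(x)v)=\frac{\alpha u}{1+u+v}-v$ on $[0,1]$, $c\in\mathcal C([0,1])$ with $0<\underline c\le c\le\overline c$. Boundary conditions (DBC) $u(0)=0,v(1)=0$ or (PBC) $u(0)=u(1),v(0)=v(1)$. Proposition 5.1: with $\alpha_0=1$ for (PBC) and $\alpha_0=1/|\cos b_0|$ for (DBC), where $b_0\in(\pi/2,\pi)$ is the smallest positive root of $Cb+\tan b=0$, $\frac1C=\int_0^1dx/c$, there is $\alpha_1>\alpha_0$ and a smooth branch $\alpha\mapsto(\bar u,\bar v)\in\mathcal C([0,1])^2$, $\alpha\in[\alpha_0,\alpha_1)$, of stationary solutions with $(\bar u,\bar v)(\alpha_0)=0$ and $\alpha$-derivative at $\alpha_0$ equal to $\frac{\kappa_1C}{\kappa_2c(x)}(\tilde U,\tilde V)(C\int_0^xdy/c)$ where $\kappa_1,\kappa_2>0$, $(\tilde U,\tilde V)=(1,1)$ for (PBC) and $(\tilde U,\tilde V)(X)=(\sin(b_0X),\sin(b_0(1-X)))$ for (DBC). *)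

theory Defs
  imports "HOL-Analysis.Analysis"
begin

definition bc_holds :: "bool \<Rightarrow> (real \<Rightarrow> real) \<Rightarrow> (real \<Rightarrow> real) \<Rightarrow> bool" where
  "bc_holds dbc u v \<longleftrightarrow>
     (if dbc then u 0 = 0 \<and> v 1 = 0 else u 0 = u 1 \<and> v 0 = v 1)"

definition stationary_sol ::
  "(real \<Rightarrow> real) \<Rightarrow> bool \<Rightarrow> real \<Rightarrow> (real \<Rightarrow> real) \<Rightarrow> (real \<Rightarrow> real) \<Rightarrow> bool" where
  "stationary_sol c dbc \<alpha> u v \<longleftrightarrow>
     continuous_on {0..1} u \<and> continuous_on {0..1} v \<and>
     (\<forall>x\<in>{0..1}.
        ((\<lambda>y. c y * u y) has_real_derivative
            (\<alpha> * v x / (1 + u x + v x) - u x)) (at x within {0..1}) \<and>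
        ((\<lambda>y. c y * v y) has_real_derivative
            (-(\<alpha> * u x / (1 + u x + v x) - v x))) (at x within {0..1})) \<and>
     bc_holds dbc u v"

text \<open>Derivative of a family \<open>\<beta> \<mapsto> U \<beta>\<close> in C([0,1]) (sup norm on [0,1]) at \<open>a\<close>,
  relative to the parameter set \<open>S\<close>.\<close>

definition unif_has_deriv ::
  "(real \<Rightarrow> real \<Rightarrow> real) \<Rightarrow> (real \<Rightarrow> real) \<Rightarrow> real \<Rightarrow> real set \<Rightarrow> bool" where
  "unif_has_deriv U dU a S \<longleftrightarrow>
     continuous_on {0..1} dU \<and>
     (\<forall>\<epsilon>>0. \<exists>\<delta>>0. \<forall>\<beta>\<in>S. \<bar>\<beta> - a\<bar> < \<delta> \<longrightarrow>
        (\<forall>x\<in>{0..1}. \<bar>U \<beta> x - U a x - (\<beta> - a) * dU x\<bar> \<le> \<epsilon> * \<bar>\<beta> - a\<bar>))"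

definition Cc :: "(real \<Rightarrow> real) \<Rightarrow> real" where
  "Cc c = 1 / integral {0..1} (\<lambda>x. 1 / c x)"

definition Xc :: "(real \<Rightarrow> real) \<Rightarrow> real \<Rightarrow> real" where
  "Xc c x = Cc c * integral {0..x} (\<lambda>y. 1 / c y)"

definition is_b0 :: "real \<Rightarrow> real \<Rightarrow> bool" where
  "is_b0 C b0 \<longleftrightarrow> 0 < b0 \<and> cos b0 \<noteq> 0 \<and> C * b0 + tan b0 = 0 \<and>
     (\<forall>b. 0 < b \<and> b < b0 \<and> cos b \<noteq> 0 \<longrightarrow> C * b + tan b \<noteq> 0)"

definition alpha0 :: "bool \<Rightarrow> real \<Rightarrow> real" where
  "alpha0 dbc b0 = (if dbc then 1 / \<bar>cos b0\<bar> else 1)"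

definition profile :: "bool \<Rightarrow> real \<Rightarrow> real \<Rightarrow> real \<times> real" where
  "profile dbc b0 X = (if dbc then (sin (b0 * X), sin (b0 * (1 - X))) else (1, 1))"

end

theory Submission
  imports Defs
begin

lemma first_order_pos:
  fixes U :: "real \<Rightarrow> real \<Rightarrow> real" and dU :: "real \<Rightarrow> real" and a :: real
  assumes d: "unif_has_deriv U dU a S" and z: "\<forall>x\<in>{0..1}. U a x = 0"
    and K: "K \<subseteq> {0..1}" "compact K" and pos: "\<forall>x\<in>K. dU x > 0"
  shows "\<exists>\<delta>>0. \<forall>\<beta>\<in>S. a < \<beta> \<and> \<beta> < a + \<delta> \<longrightarrow> (\<forall>x\<in>K. U \<beta> x > 0)"
proof (cases "K = {}")
  case True then show ?thesis by (auto intro: exI[of _ 1])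
next
  case False
  have cK: "continuous_on K dU" using d K unfolding unif_has_deriv_def
    using continuous_on_subset by blast
  obtain x0 where x0: "x0 \<in> K" "\<forall>y\<in>K. dU x0 \<le> dU y"
    using continuous_attains_inf[OF K(2) False cK] by blast
  define m where "m = dU x0"
  have m: "m > 0" using pos x0 m_def by auto
  obtain \<delta> where \<delta>: "\<delta> > 0" and H: "\<forall>\<beta>\<in>S. \<bar>\<beta> - a\<bar> < \<delta> \<longrightarrow>
        (\<forall>x\<in>{0..1}. \<bar>U \<beta> x - U a x - (\<beta> - a) * dU x\<bar> \<le> m/2 * \<bar>\<beta> - a\<bar>)"
    using d m unfolding unif_has_deriv_def by (meson half_gt_zero)
  show ?thesis
  proof (intro exI[of _ \<delta>] conjI ballI impI \<delta>)
    fix \<beta> x :: real assume b: "\<beta> \<in> S" "a < \<beta> \<and> \<beta> < a + \<delta>" and x: "x \<in> K"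
    have x1: "x \<in> {0..1}" using x K by auto
    have e: "\<bar>U \<beta> x - (\<beta> - a) * dU x\<bar> \<le> m/2 * (\<beta> - a)"
      using H b x1 z by auto
    have "(\<beta> - a) * m \<le> (\<beta> - a) * dU x"
      using x0 x b m_def by (intro mult_left_mono) auto
    moreover have "0 < (\<beta> - a) * m" using b m by auto
    moreover have "m/2 * (\<beta> - a) = (\<beta> - a) * m / 2" by simp
    ultimately show "U \<beta> x > 0" using e by (simp only: abs_le_iff) linarith
  qed
qed

lemma small_sol:
  fixes U :: "real \<Rightarrow> real \<Rightarrow> real" and dU :: "real \<Rightarrow> real" and a :: real
  assumes d: "unif_has_deriv U dU a S" and z: "\<forall>x\<in>{0..1}. U a x = 0"
  shows "\<exists>\<delta>>0. \<forall>\<beta>\<in>S. \<bar>\<beta> - a\<bar> < \<delta> \<longrightarrow> (\<forall>x\<in>{0..1}. \<bar>U \<beta> x\<bar> < 1/2)"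
proof -
  have "continuous_on {0..1} dU" using d unfolding unif_has_deriv_def by blast
  then have "bounded (dU ` {0..1})" by (intro compact_imp_bounded compact_continuous_image) auto
  then obtain B where B: "B > 0" "\<forall>x\<in>{0..1}. \<bar>dU x\<bar> \<le> B"
    unfolding bounded_pos by auto
  obtain \<delta>1 where \<delta>1: "\<delta>1 > 0" and H: "\<forall>\<beta>\<in>S. \<bar>\<beta> - a\<bar> < \<delta>1 \<longrightarrow>
        (\<forall>x\<in>{0..1}. \<bar>U \<beta> x - U a x - (\<beta> - a) * dU x\<bar> \<le> 1 * \<bar>\<beta> - a\<bar>)"
    using d unfolding unif_has_deriv_def by (meson zero_less_one)
  define \<delta> where "\<delta> = min \<delta>1 (1 / (4 * (B + 1)))"
  have \<delta>: "\<delta> > 0" using \<delta>1 B by (auto simp: \<delta>_def)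
  show ?thesis
  proof (intro exI[of _ \<delta>] conjI ballI impI \<delta>)
    fix \<beta> x :: real assume b: "\<beta> \<in> S" "\<bar>\<beta> - a\<bar> < \<delta>" and x: "x \<in> {0..1}"
    have e: "\<bar>U \<beta> x - (\<beta> - a) * dU x\<bar> \<le> \<bar>\<beta> - a\<bar>"
      using H b x z by (auto simp: \<delta>_def)
    have "\<bar>(\<beta> - a) * dU x\<bar> \<le> \<bar>\<beta> - a\<bar> * B"
      unfolding abs_mult using B x by (intro mult_left_mono) auto
    then have "\<bar>U \<beta> x\<bar> \<le> \<bar>\<beta> - a\<bar> * (B + 1)" using e by (auto simp: algebra_simps)
    also have "\<dots> < 1/2"
    proof -
      have "\<bar>\<beta> - a\<bar> < 1 / (4 * (B + 1))" using b by (auto simp: \<delta>_def)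
      then have "\<bar>\<beta> - a\<bar> * (B + 1) < 1 / (4 * (B + 1)) * (B + 1)"
        using B by (intro mult_strict_right_mono) auto
      also have "\<dots> = 1/4" using B by auto
      finally show ?thesis by simp
    qed
    finally show "\<bar>U \<beta> x\<bar> < 1/2" .
  qed
qed

lemma ode_left:
  fixes w :: "real \<Rightarrow> real"
  assumes cw: "continuous_on {0..s} w" and s: "0 < s" "s \<le> 1" and w0: "w 0 = 0" and ws: "w s \<le> 0"
    and D: "\<And>p. p \<in> {0<..s} \<Longrightarrow> w p \<le> 0 \<Longrightarrow> \<exists>D>0. (w has_real_derivative D) (at p within {0..1})"
  shows False
proof -
  obtain p0 where p0: "p0 \<in> {0..s}" "\<forall>y\<in>{0..s}. w p0 \<le> w y"
    using continuous_attains_inf[OF compact_Icc _ cw] s by auto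
  obtain p where p: "p \<in> {0<..s}" "\<forall>y\<in>{0..s}. w p \<le> w y"
  proof (cases "p0 = 0")
    case True
    then have "\<forall>y\<in>{0..s}. w s \<le> w y" using p0 w0 ws by force
    then show ?thesis using that s by auto
  next
    case False then show ?thesis using that[of p0] p0 by auto
  qed
  have "w p \<le> 0" using p(2)[rule_format, of s] ws s by auto
  then obtain Dv where Dv: "Dv > 0" "(w has_real_derivative Dv) (at p within {0..1})"
    using D p by blast
  obtain d where d: "d > 0" "\<forall>h>0. p - h \<in> {0..1} \<longrightarrow> h < d \<longrightarrow> w (p - h) < w p"
    using has_real_derivative_pos_inc_left[OF Dv(2) Dv(1)] by blast
  define h where "h = min d p / 2"
  have h: "h > 0" "h < d" "h < p" using d p by (auto simp: h_def)
  have "p - h \<in> {0..s}" using h p by auto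
  then have "w p \<le> w (p - h)" using p by auto
  moreover have "w (p - h) < w p" using d h p s by auto
  ultimately show False by simp
qed

lemma ode_right:
  fixes w :: "real \<Rightarrow> real"
  assumes cw: "continuous_on {s..1} w" and s: "0 \<le> s" "s < 1" and w1: "w 1 = 0" and ws: "w s \<le> 0"
    and D: "\<And>p. p \<in> {s..<1} \<Longrightarrow> w p \<le> 0 \<Longrightarrow> \<exists>D<0. (w has_real_derivative D) (at p within {0..1})"
  shows False
proof -
  obtain p0 where p0: "p0 \<in> {s..1}" "\<forall>y\<in>{s..1}. w p0 \<le> w y"
    using continuous_attains_inf[OF compact_Icc _ cw] s by auto
  obtain p where p: "p \<in> {s..<1}" "\<forall>y\<in>{s..1}. w p \<le> w y"
  proof (cases "p0 = 1")
    case True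
    then have "\<forall>y\<in>{s..1}. w s \<le> w y" using p0 w1 ws by force
    then show ?thesis using that s by auto
  next
    case False then show ?thesis using that[of p0] p0 by auto
  qed
  have "w p \<le> 0" using p(2)[rule_format, of s] ws s by auto
  then obtain Dv where Dv: "Dv < 0" "(w has_real_derivative Dv) (at p within {0..1})"
    using D p by blast
  obtain d where d: "d > 0" "\<forall>h>0. p + h \<in> {0..1} \<longrightarrow> h < d \<longrightarrow> w p > w (p + h)"
    using has_real_derivative_neg_dec_right[OF Dv(2) Dv(1)] by blast
  define h where "h = min d (1 - p) / 2"
  have h: "h > 0" "h < d" "h < 1 - p" using d p by (auto simp: h_def)
  have "p + h \<in> {s..1}" using h p by auto
  then have "w p \<le> w (p + h)" using p by auto
  moreover have "w (p + h) < w p" using d h p s by auto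
  ultimately show False by simp
qed

theorem lemma5p2:
  fixes c :: "real \<Rightarrow> real" and cl cu b0 \<alpha>1 \<kappa>1 \<kappa>2 :: real and dbc :: bool
    and U V :: "real \<Rightarrow> real \<Rightarrow> real"
  assumes c_cont: "continuous_on {0..1} c"
    and cl_pos: "0 < cl"
    and c_bounds: "\<And>x. x \<in> {0..1} \<Longrightarrow> cl \<le> c x \<and> c x \<le> cu"
    and b0: "is_b0 (Cc c) b0"
    and a1: "alpha0 dbc b0 < \<alpha>1"
    and k_pos: "0 < \<kappa>1" "0 < \<kappa>2"
    and stat: "\<And>\<alpha>. \<alpha> \<in> {alpha0 dbc b0..<\<alpha>1} \<Longrightarrow> stationary_sol c dbc \<alpha> (U \<alpha>) (V \<alpha>)"
    and smooth: "\<And>a. a \<in> {alpha0 dbc b0..<\<alpha>1} \<Longrightarrow>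
       (\<exists>dU dV. unif_has_deriv U dU a {alpha0 dbc b0..<\<alpha>1} \<and>
                unif_has_deriv V dV a {alpha0 dbc b0..<\<alpha>1})"
    and zero: "\<And>x. x \<in> {0..1} \<Longrightarrow> U (alpha0 dbc b0) x = 0 \<and> V (alpha0 dbc b0) x = 0"
    and deriv0: "unif_has_deriv U
         (\<lambda>x. \<kappa>1 * Cc c / (\<kappa>2 * c x) * fst (profile dbc b0 (Xc c x)))
         (alpha0 dbc b0) {alpha0 dbc b0..<\<alpha>1}"
      "unif_has_deriv V
         (\<lambda>x. \<kappa>1 * Cc c / (\<kappa>2 * c x) * snd (profile dbc b0 (Xc c x)))
         (alpha0 dbc b0) {alpha0 dbc b0..<\<alpha>1}"
  shows "\<exists>\<delta>>0. \<forall>\<alpha>. alpha0 dbc b0 < \<alpha> \<and> \<alpha> < alpha0 dbc b0 + \<delta> \<and> \<alpha> < \<alpha>1 \<longrightarrow>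
           (if dbc then (\<forall>x\<in>{0<..1}. U \<alpha> x > 0) \<and> (\<forall>x\<in>{0..<1}. V \<alpha> x > 0)
            else (\<forall>x\<in>{0..1}. U \<alpha> x > 0 \<and> V \<alpha> x > 0))"
proof -
  define a where "a = alpha0 dbc b0"
  define S where "S = {a..<\<alpha>1}"
  define C where "C = Cc c"
  define I where "I = integral {0..1} (\<lambda>y. 1 / c y)"
  have cpos: "\<And>x. x \<in> {0..1} \<Longrightarrow> c x > 0" using c_bounds cl_pos by force
  have cu: "cu > 0" using c_bounds[of 0] cl_pos by auto
  have cont_inv: "continuous_on {0..1} (\<lambda>y. 1 / c y)"
    using c_cont cpos by (intro continuous_intros) force+
  have intg: "\<And>p q. 0 \<le> p \<Longrightarrow> q \<le> 1 \<Longrightarrow> (\<lambda>y. 1 / c y) integrable_on {p..q}"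
    by (rule integrable_continuous_interval, rule continuous_on_subset[OF cont_inv]) auto
  have intlb: "\<And>p q. 0 \<le> p \<Longrightarrow> p \<le> q \<Longrightarrow> q \<le> 1 \<Longrightarrow>
      (q - p) / cu \<le> integral {p..q} (\<lambda>y. 1 / c y)"
  proof -
    fix p q :: real assume pq: "0 \<le> p" "p \<le> q" "q \<le> 1"
    have "integral {p..q} (\<lambda>y. 1 / cu) \<le> integral {p..q} (\<lambda>y. 1 / c y)"
    proof (rule integral_le)
      show "(\<lambda>y. 1 / c y) integrable_on {p..q}" using intg pq by auto
      fix y assume "y \<in> {p..q}"
      then have "y \<in> {0..1}" using pq by auto
      then show "1 / cu \<le> 1 / c y" using c_bounds cpos
        by (meson frac_le less_eq_real_def zero_less_one)
    qed auto
    then show "(q - p) / cu \<le> integral {p..q} (\<lambda>y. 1 / c y)" using pq by simp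
  qed
  have comb: "\<And>x. x \<in> {0..1} \<Longrightarrow>
      integral {0..x} (\<lambda>y. 1 / c y) + integral {x..1} (\<lambda>y. 1 / c y) = I"
    unfolding I_def using intg[of 0 1] by (auto intro!: Henstock_Kurzweil_Integration.integral_combine)
  have Ipos: "I > 0" using intlb[of 0 1] cu unfolding I_def
    by (smt (verit) divide_pos_pos)
  have Cdef: "C = 1 / I" unfolding C_def Cc_def I_def by simp
  have Cpos: "C > 0" using Ipos Cdef by simp
  have X_eq: "\<And>x. Xc c x = integral {0..x} (\<lambda>y. 1 / c y) / I"
    unfolding Xc_def C_def[symmetric] Cdef by simp
  have Xpos: "\<And>x. x \<in> {0<..1} \<Longrightarrow> Xc c x > 0"
  proof -
    fix x :: real assume x: "x \<in> {0<..1}"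
    have "0 < x / cu" using x cu by auto
    also have "\<dots> \<le> integral {0..x} (\<lambda>y. 1 / c y)" using intlb[of 0 x] x by auto
    finally show "Xc c x > 0" unfolding X_eq using Ipos by simp
  qed
  have Xle1: "\<And>x. x \<in> {0..1} \<Longrightarrow> Xc c x \<le> 1"
  proof -
    fix x :: real assume x: "x \<in> {0..1}"
    have "0 \<le> (1 - x) / cu" using x cu by auto
    also have "\<dots> \<le> integral {x..1} (\<lambda>y. 1 / c y)" using intlb[of x 1] x by auto
    finally have "integral {0..x} (\<lambda>y. 1 / c y) \<le> I" using comb[OF x] by linarith
    then show "Xc c x \<le> 1" unfolding X_eq using Ipos by simp
  qed
  have Xlt1: "\<And>x. x \<in> {0..<1} \<Longrightarrow> Xc c x < 1"
  proof -
    fix x :: real assume x: "x \<in> {0..<1}"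
    have "0 < (1 - x) / cu" using x cu by auto
    also have "\<dots> \<le> integral {x..1} (\<lambda>y. 1 / c y)" using intlb[of x 1] x by auto
    finally have "integral {0..x} (\<lambda>y. 1 / c y) < I" using comb[of x] x by auto
    then show "Xc c x < 1" unfolding X_eq using Ipos by simp
  qed
  have Xge0: "\<And>x. x \<in> {0..1} \<Longrightarrow> Xc c x \<ge> 0"
    using Xpos by (metis atLeastAtMost_iff greaterThanAtMost_iff le_less order_refl
        X_eq integral_refl box_real(2) div_0)
  have a_pos: "a > 0" using b0 unfolding a_def alpha0_def is_b0_def by auto
  have K0: "\<kappa>1 * C / \<kappa>2 > 0" using k_pos Cpos by auto
  have zU: "\<forall>x\<in>{0..1}. U a x = 0" and zV: "\<forall>x\<in>{0..1}. V a x = 0"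
    using zero unfolding a_def by auto
  have dU: "unif_has_deriv U (\<lambda>x. \<kappa>1 * C / (\<kappa>2 * c x) * fst (profile dbc b0 (Xc c x))) a S"
    using deriv0(1) unfolding a_def S_def C_def .
  have dV: "unif_has_deriv V (\<lambda>x. \<kappa>1 * C / (\<kappa>2 * c x) * snd (profile dbc b0 (Xc c x))) a S"
    using deriv0(2) unfolding a_def S_def C_def .
  have coef: "\<And>x. x \<in> {0..1} \<Longrightarrow> \<kappa>1 * C / (\<kappa>2 * c x) > 0"
    using k_pos Cpos cpos by auto
  show ?thesis
  proof (cases dbc)
    case False
    obtain d1 where d1: "d1 > 0" "\<forall>\<beta>\<in>S. a < \<beta> \<and> \<beta> < a + d1 \<longrightarrow> (\<forall>x\<in>{0..1}. U \<beta> x > 0)"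
      using first_order_pos[OF dU zU order_refl compact_Icc] coef False
      by (auto simp: profile_def)
    obtain d2 where d2: "d2 > 0" "\<forall>\<beta>\<in>S. a < \<beta> \<and> \<beta> < a + d2 \<longrightarrow> (\<forall>x\<in>{0..1}. V \<beta> x > 0)"
      using first_order_pos[OF dV zV order_refl compact_Icc] coef False
      by (auto simp: profile_def)
    show ?thesis
      apply (rule exI[of _ "min d1 d2"])
      using d1 d2 False unfolding a_def[symmetric] S_def by auto
  next
    case True
    have b0pos: "b0 > 0" using b0 unfolding is_b0_def by auto
    have b0pi: "b0 < pi"
    proof (rule ccontr)
      assume nb: "\<not> b0 < pi"
      define g where "g b = C * b * cos b + sin b" for b
      have "\<exists>x. pi/2 \<le> x \<and> x \<le> pi \<and> g x = 0"
        by (rule IVT2') (use Cpos in \<open>auto simp: g_def intro!: continuous_intros\<close>)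
      then obtain x where x: "pi/2 \<le> x" "x \<le> pi" "g x = 0" by blast
      have cx: "cos x \<noteq> 0"
      proof
        assume "cos x = 0"
        then have "sin x ^ 2 = 1" using sin_cos_squared_add[of x] by simp
        then have "sin x \<noteq> 0" by auto
        then show False using x \<open>cos x = 0\<close> by (simp add: g_def)
      qed
      have xpi: "x \<noteq> pi" using x Cpos by (auto simp: g_def)
      have "C * x + tan x = g x / cos x" using cx by (simp add: g_def tan_def field_simps)
      then have "C * x + tan x = 0" using x by simp
      moreover have "0 < x" "x < b0" using x xpi nb pi_gt_zero by linarith+
      ultimately show False using b0 cx unfolding is_b0_def C_def by blast
    qed
    have sinpos: "\<And>t. t \<in> {0<..1} \<Longrightarrow> sin (b0 * t) > 0"
      using b0pos b0pi by (intro sin_gt_zero) (auto intro: mult_pos_pos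
        simp: mult_le_cancel_left1 order.strict_trans1[of "b0 * _" b0 pi])
    obtain d1 where d1: "d1 > 0" "\<forall>\<beta>\<in>S. a < \<beta> \<and> \<beta> < a + d1 \<longrightarrow> (\<forall>x\<in>{1/2..1}. U \<beta> x > 0)"
    proof -
      have "\<forall>x\<in>{1/2..1}. \<kappa>1 * C / (\<kappa>2 * c x) * fst (profile dbc b0 (Xc c x)) > 0"
      proof
        fix x :: real assume x: "x \<in> {1/2..1}"
        have "sin (b0 * Xc c x) > 0" using x Xpos Xle1 by (intro sinpos) auto
        then show "\<kappa>1 * C / (\<kappa>2 * c x) * fst (profile dbc b0 (Xc c x)) > 0"
          using mult_pos_pos[OF coef[of x]] x True unfolding profile_def by auto
      qed
      then show ?thesis using first_order_pos[OF dU zU _ compact_Icc, of "1/2" 1] that by auto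
    qed
    obtain d2 where d2: "d2 > 0" "\<forall>\<beta>\<in>S. a < \<beta> \<and> \<beta> < a + d2 \<longrightarrow> (\<forall>x\<in>{0..1/2}. V \<beta> x > 0)"
    proof -
      have "\<forall>x\<in>{0..1/2}. \<kappa>1 * C / (\<kappa>2 * c x) * snd (profile dbc b0 (Xc c x)) > 0"
      proof
        fix x :: real assume x: "x \<in> {0..1/2}"
        have "sin (b0 * (1 - Xc c x)) > 0" using x Xge0 Xlt1 by (intro sinpos) auto
        then show "\<kappa>1 * C / (\<kappa>2 * c x) * snd (profile dbc b0 (Xc c x)) > 0"
          using mult_pos_pos[OF coef[of x]] x True unfolding profile_def by auto
      qed
      then show ?thesis using first_order_pos[OF dV zV _ compact_Icc, of 0 "1/2"] that by auto
    qed
    obtain d3 where d3: "d3 > 0" "\<forall>\<beta>\<in>S. \<bar>\<beta> - a\<bar> < d3 \<longrightarrow> (\<forall>x\<in>{0..1}. \<bar>U \<beta> x\<bar> < 1/2)"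
      using small_sol[OF dU zU] by blast
    obtain d4 where d4: "d4 > 0" "\<forall>\<beta>\<in>S. \<bar>\<beta> - a\<bar> < d4 \<longrightarrow> (\<forall>x\<in>{0..1}. \<bar>V \<beta> x\<bar> < 1/2)"
      using small_sol[OF dV zV] by blast
    define \<delta> where "\<delta> = min (min d1 d2) (min d3 d4)"
    have \<delta>: "\<delta> > 0" using d1 d2 d3 d4 by (simp add: \<delta>_def)
    show ?thesis
    proof (intro exI[of _ \<delta>] conjI allI impI \<delta>)
      fix \<alpha> assume \<alpha>: "alpha0 dbc b0 < \<alpha> \<and> \<alpha> < alpha0 dbc b0 + \<delta> \<and> \<alpha> < \<alpha>1"
      then have \<alpha>S: "\<alpha> \<in> S" and \<alpha>a: "a < \<alpha>" "\<alpha> < a + \<delta>" unfolding S_def a_def by auto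
      have Ufo: "\<forall>x\<in>{1/2..1}. U \<alpha> x > 0" using d1 \<alpha>S \<alpha>a by (auto simp: \<delta>_def)
      have Vfo: "\<forall>x\<in>{0..1/2}. V \<alpha> x > 0" using d2 \<alpha>S \<alpha>a by (auto simp: \<delta>_def)
      have Us: "\<forall>x\<in>{0..1}. \<bar>U \<alpha> x\<bar> < 1/2" using d3 \<alpha>S \<alpha>a by (auto simp: \<delta>_def)
      have Vs: "\<forall>x\<in>{0..1}. \<bar>V \<alpha> x\<bar> < 1/2" using d4 \<alpha>S \<alpha>a by (auto simp: \<delta>_def)
      have st: "stationary_sol c dbc \<alpha> (U \<alpha>) (V \<alpha>)" using stat \<alpha> by auto
      have cU: "continuous_on {0..1} (\<lambda>y. c y * U \<alpha> y)"
        and cV: "continuous_on {0..1} (\<lambda>y. c y * V \<alpha> y)"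
        using st c_cont unfolding stationary_sol_def by (auto intro: continuous_intros)
      have bc: "U \<alpha> 0 = 0" "V \<alpha> 1 = 0" using st True unfolding stationary_sol_def bc_holds_def by auto
      have derU: "\<And>x. x \<in> {0..1} \<Longrightarrow> ((\<lambda>y. c y * U \<alpha> y) has_real_derivative
            (\<alpha> * V \<alpha> x / (1 + U \<alpha> x + V \<alpha> x) - U \<alpha> x)) (at x within {0..1})"
        and derV: "\<And>x. x \<in> {0..1} \<Longrightarrow> ((\<lambda>y. c y * V \<alpha> y) has_real_derivative
            (-(\<alpha> * U \<alpha> x / (1 + U \<alpha> x + V \<alpha> x) - V \<alpha> x))) (at x within {0..1})"
        using st unfolding stationary_sol_def by auto
      have apos: "\<alpha> > 0" using \<alpha>a a_pos by auto
      have Ulow: "\<forall>x\<in>{0<..1/2}. U \<alpha> x > 0"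
      proof
        fix s :: real assume s: "s \<in> {0<..1/2}"
        show "U \<alpha> s > 0"
        proof (rule ccontr)
          assume "\<not> U \<alpha> s > 0"
          then have ws: "c s * U \<alpha> s \<le> 0" using cpos[of s] s
            by (simp add: mult_nonneg_nonpos)
          show False
          proof (rule ode_left[of s "\<lambda>y. c y * U \<alpha> y"])
            show "continuous_on {0..s} (\<lambda>y. c y * U \<alpha> y)"
              using s by (intro continuous_on_subset[OF cU]) auto
          next
            fix p assume p: "p \<in> {0<..s}" and wp: "c p * U \<alpha> p \<le> 0"
            have p1: "p \<in> {0..1}" using p s by auto
            have up: "U \<alpha> p \<le> 0" using wp cpos[OF p1]
              by (simp add: mult_le_0_iff)
            have vp: "V \<alpha> p > 0" using Vfo p s by auto
            have den: "1 + U \<alpha> p + V \<alpha> p > 0" using Us[rule_format, OF p1] vp by linarith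
            have "\<alpha> * V \<alpha> p / (1 + U \<alpha> p + V \<alpha> p) > 0" using apos vp den by auto
            then have "\<alpha> * V \<alpha> p / (1 + U \<alpha> p + V \<alpha> p) - U \<alpha> p > 0" using up by linarith
            then show "\<exists>D>0. ((\<lambda>y. c y * U \<alpha> y) has_real_derivative D) (at p within {0..1})"
              using derU[OF p1] by blast
          qed (use s ws bc in auto)
        qed
      qed
      have Vhigh: "\<forall>x\<in>{1/2..<1}. V \<alpha> x > 0"
      proof
        fix s :: real assume s: "s \<in> {1/2..<1}"
        show "V \<alpha> s > 0"
        proof (rule ccontr)
          assume "\<not> V \<alpha> s > 0"
          then have ws: "c s * V \<alpha> s \<le> 0" using cpos[of s] s
            by (simp add: mult_nonneg_nonpos)
          show False
          proof (rule ode_right[of s "\<lambda>y. c y * V \<alpha> y"])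
            show "continuous_on {s..1} (\<lambda>y. c y * V \<alpha> y)"
              using s by (intro continuous_on_subset[OF cV]) auto
          next
            fix p assume p: "p \<in> {s..<1}" and wp: "c p * V \<alpha> p \<le> 0"
            have p1: "p \<in> {0..1}" using p s by auto
            have vp: "V \<alpha> p \<le> 0" using wp cpos[OF p1]
              by (simp add: mult_le_0_iff)
            have up: "U \<alpha> p > 0" using Ufo p s by auto
            have den: "1 + U \<alpha> p + V \<alpha> p > 0" using Vs[rule_format, OF p1] up by linarith
            have "\<alpha> * U \<alpha> p / (1 + U \<alpha> p + V \<alpha> p) > 0" using apos up den by auto
            then have "-(\<alpha> * U \<alpha> p / (1 + U \<alpha> p + V \<alpha> p) - V \<alpha> p) < 0" using vp by linarith
            then show "\<exists>D<0. ((\<lambda>y. c y * V \<alpha> y) has_real_derivative D) (at p within {0..1})"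
              using derV[OF p1] by blast
          qed (use s ws bc in auto)
        qed
      qed
      have "\<forall>x\<in>{0<..1}. U \<alpha> x > 0"
      proof
        fix x :: real assume "x \<in> {0<..1}"
        then show "U \<alpha> x > 0" using Ulow Ufo by (cases "x \<le> 1/2") auto
      qed
      moreover have "\<forall>x\<in>{0..<1}. V \<alpha> x > 0"
      proof
        fix x :: real assume "x \<in> {0..<1}"
        then show "V \<alpha> x > 0" using Vhigh Vfo by (cases "x \<le> 1/2") auto
      qed
      ultimately show "if dbc then (\<forall>x\<in>{0<..1}. U \<alpha> x > 0) \<and> (\<forall>x\<in>{0..<1}. V \<alpha> x > 0)
            else (\<forall>x\<in>{0..1}. U \<alpha> x > 0 \<and> V \<alpha> x > 0)" using True by simp
    qed
  qed
qed

end
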